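(* Let $\Sigma$ be a finite alphabet, $\Omega$ a distribution of $\Sigma$ and $\mathsf{Obs}$ an observation function over $\Sigma$. Then $\Omega\models\mathsf{Obs}$ if and only if for every $\sigma\in\mathsf{Dom}(\mathsf{Obs})$, \[\mathsf{Obs}(\sigma)=\bigwedge_{\Sigma_i\in\Omega}\mathsf{Obs}_{\Sigma_i}(\sigma|_{\Sigma_i}),\] where $+$ is read as true and $-$ as false.
   Context: The projection $\sigma|_{\Sigma'}$ of a word $\sigma$ onto $\Sigma'\subseteq\Sigma$ is the subsequence of symbols of $\sigma$ lying in $\Sigma'$; for sets, $S|_{\Sigma'}=\{\sigma|_{\Sigma'}\mid\sigma\in S\}$. For languages $\mathcal L_i\subseteq\Sigma_i^\star$, $\|_{i=1}^n(\mathcal L_i,\Sigma_i)=\{\sigma\in(\bigcup_i\Sigma_i)^\star\mid\forall i.\ \sigma|_{\Sigma_i}\in\mathcal L_i\}$. A distribution of $\Sigma$ is a finite set $\Omega=\{\Sigma_1,\dots,\Sigma_n\}$ of subsets of $\Sigma$ with $\bigcup_i\Sigma_i=\Sigma$. A language $\mathcal L\subseteq\Sigma^\star$ is a product language over $\Omega$, written $\Omega\models\mathcal L$, if there are $\mathcal L_i\subseteq\Sigma_i^\star$ with $\mathcal L=\|_{i=1}^n(\mathcal L_i,\Sigma_i)$. An observation function over $\Sigma$ is a partial function $\mathsf{Obs}:\Sigma^\star\rightharpoonup\{+,-\}$ with finite domain $\mathsf{Dom}(\mathsf{Obs})$. A language $\mathcal L$ agrees with $\mathsf{Obs}$, written $\mathcal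 L\models\mathsf{Obs}$, if for all $\sigma\in\mathsf{Dom}(\mathsf{Obs})$: $\sigma\in\mathcal L\iff\mathsf{Obs}(\sigma)=+$. We write $\Omega\models\mathsf{Obs}$ if there exists $\mathcal L$ with $\Omega\models\mathcal L$ and $\mathcal L\models\mathsf{Obs}$. For $\Sigma'\subseteq\Sigma$, the local observation function $\mathsf{Obs}_{\Sigma'}$ has domain $\mathsf{Dom}(\mathsf{Obs})|_{\Sigma'}$ and, for $\sigma'$ in it, $\mathsf{Obs}_{\Sigma'}(\sigma')=+$ iff there is $\sigma\in\mathsf{Dom}(\mathsf{Obs})$ with $\sigma|_{\Sigma'}=\sigma'$ and $\mathsf{Obs}(\sigma)=+$, and $\mathsf{Obs}_{\Sigma'}(\sigma')=-$ otherwise. *)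

theory Defs
  imports Main
begin

definition proj :: "'a list \<Rightarrow> 'a set \<Rightarrow> 'a list" where
  "proj \<sigma> S = filter (\<lambda>x. x \<in> S) \<sigma>"

definition proj_set :: "'a list set \<Rightarrow> 'a set \<Rightarrow> 'a list set" where
  "proj_set W S = (\<lambda>\<sigma>. proj \<sigma> S) ` W"

definition sync_prod :: "'a set set \<Rightarrow> ('a set \<Rightarrow> 'a list set) \<Rightarrow> 'a list set" where
  "sync_prod \<Omega> Lf = {\<sigma> \<in> lists (\<Union>\<Omega>). \<forall>S\<in>\<Omega>. proj \<sigma> S \<in> Lf S}"

definition is_distribution :: "'a set \<Rightarrow> 'a set set \<Rightarrow> bool" where
  "is_distribution Sig \<Omega> \<longleftrightarrow> finite \<Omega> \<and> (\<forall>S\<in>\<Omega>. S \<subseteq> Sig) \<and> \<Union>\<Omega> = Sig"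

definition product_language :: "'a set set \<Rightarrow> 'a list set \<Rightarrow> bool" where
  "product_language \<Omega> L \<longleftrightarrow>
     (\<exists>Lf. (\<forall>S\<in>\<Omega>. Lf S \<subseteq> lists S) \<and> L = sync_prod \<Omega> Lf)"

text \<open>Observation functions: partial maps from words to \<open>{+,-}\<close>, with \<open>+\<close> encoded as
 \<open>True\<close> and \<open>-\<close> as \<open>False\<close>.\<close>

type_synonym 'a obs = "'a list \<Rightarrow> bool option"

definition is_obs :: "'a set \<Rightarrow> 'a obs \<Rightarrow> bool" where
  "is_obs Sig Obs \<longleftrightarrow> finite (dom Obs) \<and> dom Obs \<subseteq> lists Sig"

definition agrees :: "'a list set \<Rightarrow> 'a obs \<Rightarrow> bool" where
  "agrees L Obs \<longleftrightarrow> (\<forall>\<sigma>\<in>dom Obs. (\<sigma> \<in> L \<longleftrightarrow> Obs \<sigma> = Some True))"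

definition dist_models_obs :: "'a set set \<Rightarrow> 'a obs \<Rightarrow> bool" where
  "dist_models_obs \<Omega> Obs \<longleftrightarrow> (\<exists>L. product_language \<Omega> L \<and> agrees L Obs)"

definition local_obs :: "'a obs \<Rightarrow> 'a set \<Rightarrow> 'a obs" where
  "local_obs Obs S = (\<lambda>\<sigma>'. if \<sigma>' \<in> proj_set (dom Obs) S
       then Some (\<exists>\<sigma>\<in>dom Obs. proj \<sigma> S = \<sigma>' \<and> Obs \<sigma> = Some True)
       else None)"

end

theory Submission
  imports Defs
begin

lemma local_obs_dom:
  assumes "\<sigma> \<in> dom Obs"
  shows "local_obs Obs S (proj \<sigma> S) = Some True \<longleftrightarrow>
         (\<exists>\<tau>\<in>dom Obs. proj \<tau> S = proj \<sigma> S \<and> Obs \<tau> = Some True)"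
  using assms unfolding local_obs_def proj_set_def by auto

theorem mainTheorem3:
  fixes Sig :: "'a set" and \<Omega> :: "'a set set" and Obs :: "'a obs"
  assumes "finite Sig"
    and "is_distribution Sig \<Omega>"
    and "is_obs Sig Obs"
  shows "dist_models_obs \<Omega> Obs \<longleftrightarrow>
    (\<forall>\<sigma>\<in>dom Obs. Obs \<sigma> = Some (\<forall>S\<in>\<Omega>. local_obs Obs S (proj \<sigma> S) = Some True))"
proof
  have U: "\<Union>\<Omega> = Sig" using assms(2) unfolding is_distribution_def by auto
  have D: "\<And>\<sigma>. \<sigma> \<in> dom Obs \<Longrightarrow> \<sigma> \<in> lists (\<Union>\<Omega>)" using assms(3) U unfolding is_obs_def by auto
  {
    assume "dist_models_obs \<Omega> Obs"
    then obtain Lf where ag: "agrees (sync_prod \<Omega> Lf) Obs"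
      unfolding dist_models_obs_def product_language_def by auto
    show "\<forall>\<sigma>\<in>dom Obs. Obs \<sigma> = Some (\<forall>S\<in>\<Omega>. local_obs Obs S (proj \<sigma> S) = Some True)"
    proof
      fix \<sigma> assume s: "\<sigma> \<in> dom Obs"
      have iff: "\<And>\<tau>. \<tau> \<in> dom Obs \<Longrightarrow> (\<tau> \<in> sync_prod \<Omega> Lf) = (Obs \<tau> = Some True)"
        using ag unfolding agrees_def by auto
      show "Obs \<sigma> = Some (\<forall>S\<in>\<Omega>. local_obs Obs S (proj \<sigma> S) = Some True)"
      proof (cases "Obs \<sigma> = Some True")
        case True
        then show ?thesis using s local_obs_dom[OF s] by auto
      next
        case False
        then have OF: "Obs \<sigma> = Some False" using s by auto
        have "\<not> (\<forall>S\<in>\<Omega>. local_obs Obs S (proj \<sigma> S) = Some True)"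
        proof
          assume A: "\<forall>S\<in>\<Omega>. local_obs Obs S (proj \<sigma> S) = Some True"
          have "\<forall>S\<in>\<Omega>. proj \<sigma> S \<in> Lf S"
          proof
            fix S assume "S \<in> \<Omega>"
            then obtain \<tau> where t: "\<tau> \<in> dom Obs" "proj \<tau> S = proj \<sigma> S" "Obs \<tau> = Some True"
              using A local_obs_dom[OF s] by blast
            then have "\<tau> \<in> sync_prod \<Omega> Lf" using iff by auto
            then show "proj \<sigma> S \<in> Lf S" using t(2) \<open>S \<in> \<Omega>\<close> unfolding sync_prod_def by auto
          qed
          then have "\<sigma> \<in> sync_prod \<Omega> Lf" using D[OF s] unfolding sync_prod_def by auto
          then show False using iff[OF s] False by auto
        qed
        then show ?thesis using OF by simp
      qed
    qed
  }
  {
    assume H: "\<forall>\<sigma>\<in>dom Obs. Obs \<sigma> = Some (\<forall>S\<in>\<Omega>. local_obs Obs S (proj \<sigma> S) = Some True)"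
    define Lf where "Lf S = {proj \<tau> S | \<tau>. \<tau> \<in> dom Obs \<and> Obs \<tau> = Some True}" for S
    have sub: "\<forall>S\<in>\<Omega>. Lf S \<subseteq> lists S" unfolding Lf_def proj_def by auto
    have "agrees (sync_prod \<Omega> Lf) Obs"
      unfolding agrees_def
    proof
      fix \<sigma> assume s: "\<sigma> \<in> dom Obs"
      have "(\<sigma> \<in> sync_prod \<Omega> Lf) = (\<forall>S\<in>\<Omega>. proj \<sigma> S \<in> Lf S)"
        using D[OF s] unfolding sync_prod_def by auto
      also have "\<dots> = (\<forall>S\<in>\<Omega>. local_obs Obs S (proj \<sigma> S) = Some True)"
        using local_obs_dom[OF s] unfolding Lf_def by (auto; metis)
      also have "\<dots> = (Obs \<sigma> = Some True)" using H s by auto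
      finally show "(\<sigma> \<in> sync_prod \<Omega> Lf) = (Obs \<sigma> = Some True)" .
    qed
    then show "dist_models_obs \<Omega> Obs"
      unfolding dist_models_obs_def product_language_def using sub by blast
  }
qed

end
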